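(* Let $\sigma\neq0$, let $T$ be the shift operator $(Tf)(x)=f(x+\sigma)$ acting on polynomials in $x$, and let $\Delta=\frac{1}{\sigma}\sum_{k=l}^{m}a_kT^k$ (integers $l<m$) with $\sum_{k=l}^m a_k=0$ and $\sum_{k=l}^m k a_k=1$. Let $\beta=\big(\sum_{k=l}^m a_k k T^k\big)^{-1}$ be its conjugate operator, and for $n\ge 1$ let $P_n(x)=(x\beta)^n\cdot 1$, i.e. the result of applying $n$ times the operator "apply $\beta$, then multiply by $x$" to the constant function $1$. Then $P_n$ is a well-defined polynomial in $x$ of degree $n$ of the form $$P_n(x)=\sum_{k=1}^{n}A_k\,\sigma^{n-k}x^k,\qquad A_n=1,$$ where all coefficients $A_k$ are finite numbers depending only on the coefficients $a_l,\dots,a_m$ and not on $\sigma$.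
   Context: Here $x$ denotes the operator of multiplication by $x$. The sequence $P_n$ (with $P_0=1$) is the basic sequence of $\Delta$, satisfying $\Delta P_n=nP_{n-1}$. *)

theory Defs
  imports "HOL-Computational_Algebra.Polynomial"
begin

definition shiftk :: "'a::comm_ring_1 \<Rightarrow> int \<Rightarrow> 'a poly \<Rightarrow> 'a poly" where
  "shiftk \<sigma> k p = pcompose p [:of_int k * \<sigma>, 1:]"

definition Delta_op :: "(int \<Rightarrow> 'a::field) \<Rightarrow> int \<Rightarrow> int \<Rightarrow> 'a \<Rightarrow> 'a poly \<Rightarrow> 'a poly" where
  "Delta_op a l m \<sigma> p = smult (inverse \<sigma>) (\<Sum>k\<in>{l..m}. smult (a k) (shiftk \<sigma> k p))"

definition conj_inv_op :: "(int \<Rightarrow> 'a::field) \<Rightarrow> int \<Rightarrow> int \<Rightarrow> 'a \<Rightarrow> 'a poly \<Rightarrow> 'a poly" where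
  "conj_inv_op a l m \<sigma> p = (\<Sum>k\<in>{l..m}. smult (a k * of_int k) (shiftk \<sigma> k p))"

definition beta_op :: "(int \<Rightarrow> 'a::field) \<Rightarrow> int \<Rightarrow> int \<Rightarrow> 'a \<Rightarrow> 'a poly \<Rightarrow> 'a poly" where
  "beta_op a l m \<sigma> p = (THE q. conj_inv_op a l m \<sigma> q = p)"

definition Pseq :: "(int \<Rightarrow> 'a::field) \<Rightarrow> int \<Rightarrow> int \<Rightarrow> 'a \<Rightarrow> nat \<Rightarrow> 'a poly" where
  "Pseq a l m \<sigma> n = ((\<lambda>p. [:0, 1:] * beta_op a l m \<sigma> p) ^^ n) 1"

end

theory Submission
  imports Defs
begin

lemma shift_coeff_high:
  fixes p :: "'a::field_char_0 poly"
  assumes "i \<ge> degree p"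
  shows "coeff (shiftk \<sigma> k p) i = coeff p i"
proof -
  let ?q = "[:of_int k * \<sigma>, 1:] :: 'a poly"
  have dq: "degree ?q = 1" by simp
  have d: "degree (shiftk \<sigma> k p) = degree p"
    unfolding shiftk_def using degree_pcompose[of p ?q] dq by simp
  show ?thesis
  proof (cases "i = degree p")
    case True
    have "lead_coeff (pcompose p ?q) = lead_coeff p * lead_coeff ?q ^ degree p"
      by (rule lead_coeff_comp) (simp add: dq)
    then show ?thesis using True d unfolding shiftk_def by simp
  next
    case False
    then have "i > degree p" using assms by simp
    then show ?thesis using d by (simp add: coeff_eq_0)
  qed
qed

lemma conj_coeff_high:
  fixes a :: "int \<Rightarrow> 'a::field_char_0" and p :: "'a poly"
  assumes "(\<Sum>k\<in>{l..m}. of_int k * a k) = 1"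
    and "i \<ge> degree p"
  shows "coeff (conj_inv_op a l m \<sigma> p) i = coeff p i"
proof -
  have "coeff (conj_inv_op a l m \<sigma> p) i = (\<Sum>k\<in>{l..m}. a k * of_int k * coeff p i)"
    unfolding conj_inv_op_def coeff_sum using shift_coeff_high[OF assms(2)] by simp
  also have "\<dots> = (\<Sum>k\<in>{l..m}. of_int k * a k) * coeff p i"
    unfolding sum_distrib_right by (rule sum.cong) (simp_all add: mult_ac)
  finally show ?thesis using assms(1) by simp
qed

lemma conj_0: "conj_inv_op a l m \<sigma> 0 = 0"
  unfolding conj_inv_op_def shiftk_def by simp

lemma conj_diff: "conj_inv_op a l m \<sigma> (p - q) = conj_inv_op a l m \<sigma> p - conj_inv_op a l m \<sigma> q"
  unfolding conj_inv_op_def shiftk_def by (simp add: pcompose_diff smult_diff_right sum_subtractf)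

lemma conj_smult: "conj_inv_op a l m \<sigma> (smult c p) = smult c (conj_inv_op a l m \<sigma> p)"
  unfolding conj_inv_op_def shiftk_def by (rule poly_eqI) (simp add: pcompose_smult coeff_sum sum_distrib_left mult_ac)


context
  fixes a :: "int \<Rightarrow> 'a::field_char_0" and l m :: int
  assumes H: "(\<Sum>k\<in>{l..m}. of_int k * a k) = 1"
begin

lemma conj_deg_lead:
  "degree (conj_inv_op a l m \<sigma> q) = degree q \<and> lead_coeff (conj_inv_op a l m \<sigma> q) = lead_coeff q"
proof (cases "q = 0")
  case True then show ?thesis by (simp add: conj_0)
next
  case False
  have hi: "\<And>i. i \<ge> degree q \<Longrightarrow> coeff (conj_inv_op a l m \<sigma> q) i = coeff q i"
    using conj_coeff_high[OF H] by blast
  have le: "degree (conj_inv_op a l m \<sigma> q) \<le> degree q"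
    by (rule degree_le) (simp add: hi coeff_eq_0)
  have ge: "degree q \<le> degree (conj_inv_op a l m \<sigma> q)"
    by (rule le_degree) (simp add: hi False)
  from le ge have "degree (conj_inv_op a l m \<sigma> q) = degree q" by simp
  then show ?thesis using hi by simp
qed

lemma conj_inj: "conj_inv_op a l m \<sigma> q = 0 \<Longrightarrow> q = 0"
proof -
  assume "conj_inv_op a l m \<sigma> q = 0"
  then have "lead_coeff q = 0" using conj_deg_lead[of \<sigma> q] by simp
  then show "q = 0" by simp
qed

lemma conj_surj: "\<exists>q. conj_inv_op a l m \<sigma> q = p"
proof (induction "degree p" arbitrary: p rule: less_induct)
  case less
  define r where "r = conj_inv_op a l m \<sigma> p - p"
  have hr: "\<And>i. i \<ge> degree p \<Longrightarrow> coeff r i = 0"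
    unfolding r_def using conj_coeff_high[OF H] by simp
  show ?case
  proof (cases "r = 0")
    case True then show ?thesis unfolding r_def by auto
  next
    case False
    have "degree r < degree p"
    proof (rule ccontr)
      assume "\<not> degree r < degree p"
      then have "coeff r (degree r) = 0" using hr by simp
      then show False using False by simp
    qed
    then obtain s where s: "conj_inv_op a l m \<sigma> s = r" using less by blast
    have "conj_inv_op a l m \<sigma> (p - s) = p" by (simp add: conj_diff s r_def)
    then show ?thesis by blast
  qed
qed

lemma conj_unique: "\<exists>!q. conj_inv_op a l m \<sigma> q = p"
proof -
  obtain q where q: "conj_inv_op a l m \<sigma> q = p" using conj_surj by blast
  have "q' = q" if "conj_inv_op a l m \<sigma> q' = p" for q'
  proof -
    have "conj_inv_op a l m \<sigma> (q' - q) = 0" using that q by (simp add: conj_diff)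
    then have "q' - q = 0" by (rule conj_inj)
    then show ?thesis by simp
  qed
  then show ?thesis using q by blast
qed

lemma beta_eq: "conj_inv_op a l m \<sigma> q = p \<Longrightarrow> beta_op a l m \<sigma> p = q"
  unfolding beta_op_def by (rule the1_equality[OF conj_unique])

lemma beta_prop: "conj_inv_op a l m \<sigma> (beta_op a l m \<sigma> p) = p"
  unfolding beta_op_def by (rule theI'[OF conj_unique])

lemma beta_smult: "beta_op a l m \<sigma> (smult d p) = smult d (beta_op a l m \<sigma> p)"
  by (rule beta_eq) (simp add: conj_smult beta_prop)

lemma shift_sc:
  "shiftk \<sigma> k (pcompose p [:0,c:]) = pcompose (shiftk (c*\<sigma>) k p) [:0,c:]"
proof -
  have e: "pcompose [:0,c:] [:of_int k * \<sigma>, 1:] = pcompose [:of_int k * (c*\<sigma>), 1:] [:0, c:]"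
    by (simp add: pcompose_pCons algebra_simps)
  show ?thesis unfolding shiftk_def
    by (metis e pcompose_assoc)
qed

lemma conj_sc:
  "conj_inv_op a l m \<sigma> (pcompose p [:0,c:]) = pcompose (conj_inv_op a l m (c*\<sigma>) p) [:0,c:]"
  unfolding conj_inv_op_def by (simp add: shift_sc pcompose_sum pcompose_smult)

lemma beta_sc:
  "beta_op a l m \<sigma> (pcompose q [:0,c:]) = pcompose (beta_op a l m (c*\<sigma>) q) [:0,c:]"
  by (rule beta_eq) (simp add: conj_sc beta_prop)

lemma Pseq_Suc: "Pseq a l m \<sigma> (Suc n) = [:0,1:] * beta_op a l m \<sigma> (Pseq a l m \<sigma> n)"
  unfolding Pseq_def by simp

lemma Pseq_scale:
  assumes "\<sigma> \<noteq> 0"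
  shows "Pseq a l m \<sigma> n = smult (\<sigma>^n) (pcompose (Pseq a l m 1 n) [:0, inverse \<sigma>:])"
proof (induction n)
  case 0 then show ?case unfolding Pseq_def by (simp add: pcompose_1)
next
  case (Suc n)
  let ?c = "inverse \<sigma>"
  let ?r = "beta_op a l m 1 (Pseq a l m 1 n)"
  have cs: "?c * \<sigma> = 1" using assms by simp
  have "Pseq a l m \<sigma> (Suc n) = [:0,1:] * smult (\<sigma>^n) (pcompose ?r [:0,?c:])"
    by (simp add: Pseq_Suc Suc beta_smult beta_sc cs)
  also have "\<dots> = smult (\<sigma>^Suc n) (pcompose ([:0,1:] * ?r) [:0,?c:])"
  proof -
    have eq: "\<sigma> * \<sigma>^n * inverse \<sigma> = \<sigma>^n" using assms by simp
    show ?thesis using assms by (simp add: pcompose_mult pcompose_pCons, simp only: eq)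
  qed
  finally show ?case by (simp add: Pseq_Suc)
qed

lemma Pseq_monic:
  "degree (Pseq a l m \<sigma> n) = n \<and> lead_coeff (Pseq a l m \<sigma> n) = 1 \<and> (n \<ge> 1 \<longrightarrow> coeff (Pseq a l m \<sigma> n) 0 = 0)"
proof (induction n)
  case 0 then show ?case unfolding Pseq_def by simp
next
  case (Suc n)
  let ?q = "beta_op a l m \<sigma> (Pseq a l m \<sigma> n)"
  have c: "conj_inv_op a l m \<sigma> ?q = Pseq a l m \<sigma> n" by (rule beta_prop)
  have "degree (conj_inv_op a l m \<sigma> ?q) = degree ?q \<and> lead_coeff (conj_inv_op a l m \<sigma> ?q) = lead_coeff ?q"
    by (rule conj_deg_lead)
  then have e: "degree (Pseq a l m \<sigma> n) = degree ?q \<and> lead_coeff (Pseq a l m \<sigma> n) = lead_coeff ?q"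
    unfolding c .
  have "degree ?q = n \<and> lead_coeff ?q = 1"
    using e Suc.IH by (metis (no_types))
  then have d: "degree ?q = n" and lc: "coeff ?q n = 1" by auto
  have nz: "?q \<noteq> 0" using lc by auto
  show ?case using d lc nz by (simp add: Pseq_Suc)
qed

end

theorem theorem2p4:
  fixes a :: "int \<Rightarrow> 'a::field_char_0" and l m :: int and n :: nat
  assumes "l < m"
    and "(\<Sum>k\<in>{l..m}. a k) = 0"
    and "(\<Sum>k\<in>{l..m}. of_int k * a k) = 1"
    and "n \<ge> 1"
  shows "(\<forall>\<sigma>::'a. \<sigma> \<noteq> 0 \<longrightarrow> (\<forall>p. \<exists>!q. conj_inv_op a l m \<sigma> q = p))
       \<and> (\<exists>A :: nat \<Rightarrow> 'a. A n = 1 \<and>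
            (\<forall>\<sigma>::'a. \<sigma> \<noteq> 0 \<longrightarrow>
               Pseq a l m \<sigma> n = (\<Sum>k\<in>{1..n}. monom (A k * \<sigma> ^ (n - k)) k)
             \<and> degree (Pseq a l m \<sigma> n) = n))"
proof (intro conjI allI impI)
  fix \<sigma> :: 'a and p
  show "\<exists>!q. conj_inv_op a l m \<sigma> q = p" using conj_unique[OF assms(3)] .
next
  define A where "A k = coeff (Pseq a l m 1 n) k" for k
  have M: "degree (Pseq a l m 1 n) = n" "lead_coeff (Pseq a l m 1 n) = 1" "coeff (Pseq a l m 1 n) 0 = 0"
    using Pseq_monic[OF assms(3), of 1 n] assms(4) by auto
  show "\<exists>A :: nat \<Rightarrow> 'a. A n = 1 \<and>
            (\<forall>\<sigma>::'a. \<sigma> \<noteq> 0 \<longrightarrow>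
               Pseq a l m \<sigma> n = (\<Sum>k\<in>{1..n}. monom (A k * \<sigma> ^ (n - k)) k)
             \<and> degree (Pseq a l m \<sigma> n) = n)"
  proof (intro exI conjI allI impI)
    show "A n = 1" using M by (simp add: A_def)
  next
    fix \<sigma> :: 'a assume s: "\<sigma> \<noteq> 0"
    show "degree (Pseq a l m \<sigma> n) = n" using Pseq_monic[OF assms(3)] by blast
    show "Pseq a l m \<sigma> n = (\<Sum>k\<in>{1..n}. monom (A k * \<sigma> ^ (n - k)) k)"
    proof (rule poly_eqI)
      fix i
      have L: "coeff (Pseq a l m \<sigma> n) i = \<sigma>^n * (inverse \<sigma>)^i * A i"
        by (simp add: Pseq_scale[OF assms(3) s] coeff_pcompose_linear A_def)
      have R: "coeff (\<Sum>k\<in>{1..n}. monom (A k * \<sigma> ^ (n - k)) k) i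
              = (if i \<in> {1..n} then A i * \<sigma> ^ (n - i) else 0)"
        by (simp add: coeff_sum coeff_monom)
      show "coeff (Pseq a l m \<sigma> n) i = coeff (\<Sum>k\<in>{1..n}. monom (A k * \<sigma> ^ (n - k)) k) i"
      proof (cases "i \<in> {1..n}")
        case True
        then have "\<sigma>^n = \<sigma>^(n-i) * \<sigma>^i" by (simp add: power_add[symmetric])
        then show ?thesis using L R True s by (simp add: power_inverse field_simps)
      next
        case False
        then have "A i = 0"
        proof (cases "i = 0")
          case True then show ?thesis using M by (simp add: A_def)
        next
          case False
          then have "i > n" using \<open>i \<notin> {1..n}\<close> by auto
          then show ?thesis using M by (simp add: A_def coeff_eq_0)
        qed
        then show ?thesis using L R False by simp
      qed
    qed
  qed
qed

end
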